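(* Let $\mathbb{X}$ be a finite-dimensional real Banach space. Then $n(\mathbb{X})=1$ if and only if $(x,y)$ is a parallel pair for every $x\in \mathrm{Ext}\,B_{\mathbb{X}}$ and every $y\in S_{\mathbb{X}}$.
   Context: All spaces are real. $\mathrm{Ext}\,B_{\mathbb{X}}$ is the set of extreme points of the unit ball $B_{\mathbb{X}}$, $S_{\mathbb{X}}$ the unit sphere, $\mathbb{L}(\mathbb{X})$ the bounded linear operators on $\mathbb{X}$. The numerical radius of $T\in\mathbb{L}(\mathbb{X})$ is $v(T)=\sup\{|f(Tx)|: x\in S_{\mathbb{X}}, f\in S_{\mathbb{X}^*}, f(x)=1\}$, and the numerical index is $n(\mathbb{X})=\inf\{v(T): T\in\mathbb{L}(\mathbb{X}),\ \|T\|=1\}$. $(x,y)$ is a parallel pair if $\|x+\lambda y\|=\|x\|+\|y\|$ for some scalar $\lambda$ with $|\lambda|=1$. *)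

theory Defs
  imports "HOL-Analysis.Analysis"
begin

definition numerical_radius :: "('a::real_normed_vector \<Rightarrow> 'a) \<Rightarrow> real" where
  "numerical_radius T =
     Sup {\<bar>f (T x)\<bar> | x f. norm x = 1 \<and> bounded_linear f \<and> onorm f = 1 \<and> f x = 1}"

definition numerical_index :: "'a::real_normed_vector itself \<Rightarrow> real" where
  "numerical_index (_ :: 'a itself) =
     Inf {numerical_radius T | T :: 'a \<Rightarrow> 'a. bounded_linear T \<and> onorm T = 1}"

definition parallel_pair :: "'a::real_normed_vector \<Rightarrow> 'a \<Rightarrow> bool" where
  "parallel_pair x y \<longleftrightarrow> (\<exists>l::real. \<bar>l\<bar> = 1 \<and> norm (x + l *\<^sub>R y) = norm x + norm y)"

end

theory Submission
  imports Defs
begin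


lemma HB_step:
  fixes f :: "'a::real_normed_vector \<Rightarrow> real"
  assumes lf: "linear f" and bd: "\<And>m. m \<in> span T \<Longrightarrow> f m \<le> norm m"
    and z: "z \<notin> span T"
  shows "\<exists>f'. linear f' \<and> (\<forall>m\<in>span T. f' m = f m) \<and> (\<forall>w\<in>span (insert z T). f' w \<le> norm w)"
proof -
  define A where "A = {f m - norm (m - z) | m. m \<in> span T}"
  define c where "c = Sup A"
  have key: "f m1 - norm (m1 - z) \<le> norm (m2 + z) - f m2" if "m1 \<in> span T" "m2 \<in> span T" for m1 m2
  proof -
    have "f m1 + f m2 = f (m1 + m2)" using lf by (simp add: linear_add)
    also have "\<dots> \<le> norm (m1 + m2)" using bd that by (simp add: span_add)
    also have "\<dots> = norm ((m1 - z) + (m2 + z))" by (simp add: algebra_simps)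
    also have "\<dots> \<le> norm (m1 - z) + norm (m2 + z)" by (rule norm_triangle_ineq)
    finally show ?thesis by linarith
  qed
  have Ane: "A \<noteq> {}" unfolding A_def using span_zero by blast
  have Abdd: "bdd_above A" unfolding A_def bdd_above_def
    using key[OF _ span_zero] by blast
  have c_up: "f m - norm (m - z) \<le> c" if "m \<in> span T" for m
    unfolding c_def by (rule cSup_upper[OF _ Abdd]) (use that A_def in blast)
  have c_lo: "c \<le> norm (m + z) - f m" if "m \<in> span T" for m
    unfolding c_def by (rule cSup_least[OF Ane]) (use key that A_def in blast)
  obtain C where C: "C \<subseteq> T" "independent C" "T \<subseteq> span C"
    using maximal_independent_subset[of T] by blast
  have spC: "span C = span T"
    using C by (metis span_mono span_span subset_antisym span_minimal subspace_span)
  have zC: "z \<notin> C" using z C spC span_base by blast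
  have indz: "independent (insert z C)"
    using C z spC by (simp add: independent_insert zC)
  obtain g where g: "linear g" "\<forall>x\<in>insert z C. g x = (if x = z then c else f x)"
    using linear_independent_extend[OF indz, of "\<lambda>x. if x = z then c else f x"] by (elim exE conjE)
  have gf: "g m = f m" if "m \<in> span T" for m
  proof -
    have "m \<in> span C" using that spC by simp
    then show ?thesis
      by (rule linear_eq_on[OF g(1) lf]) (use g(2) zC in auto)
  qed
  have gz: "g z = c" using g(2) by simp
  have "\<forall>w\<in>span (insert z T). g w \<le> norm w"
  proof
    fix w assume "w \<in> span (insert z T)"
    then obtain k where k: "w - k *\<^sub>R z \<in> span T" by (auto simp: span_insert)
    define m where "m = w - k *\<^sub>R z"
    have m: "m \<in> span T" using k m_def by simp
    have w: "w = m + k *\<^sub>R z" using m_def by simp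
    have gw: "g w = f m + k * c" using g(1) gf[OF m] gz w by (simp add: linear_add linear_scale)
    show "g w \<le> norm w"
    proof (cases "k = 0")
      case True then show ?thesis using gw w bd[OF m] by simp
    next
      case False
      show ?thesis
      proof (cases "k > 0")
        case True
        have mk: "(1/k) *\<^sub>R m \<in> span T" using m by (simp add: span_scale)
        have "c \<le> norm ((1/k) *\<^sub>R m + z) - f ((1/k) *\<^sub>R m)" by (rule c_lo[OF mk])
        also have "(1/k) *\<^sub>R m + z = (1/k) *\<^sub>R w" using w True by (simp add: algebra_simps)
        finally have "c \<le> (1/k) * norm w - (1/k) * f m" using True lf by (simp add: linear_scale)
        then have "k * c \<le> k * ((1/k) * norm w - (1/k) * f m)" using True by (simp add: mult_left_mono)
        then have "k * c \<le> norm w - f m" using True by (simp add: right_diff_distrib)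
        then show ?thesis using gw by simp
      next
        case False
        then have kn: "k < 0" using \<open>k \<noteq> 0\<close> by simp
        define s where "s = - k"
        have s: "s > 0" using kn s_def by simp
        have mk: "(1/s) *\<^sub>R m \<in> span T" using m by (simp add: span_scale)
        have "f ((1/s) *\<^sub>R m) - norm ((1/s) *\<^sub>R m - z) \<le> c" by (rule c_up[OF mk])
        also have "(1/s) *\<^sub>R m - z = (1/s) *\<^sub>R w" using w s s_def by (simp add: algebra_simps)
        finally have "(1/s) * f m - (1/s) * norm w \<le> c" using s lf by (simp add: linear_scale)
        then have "s * ((1/s) * f m - (1/s) * norm w) \<le> s * c" using s by (simp add: mult_left_mono)
        then have "f m - norm w \<le> s * c" using s by (simp add: right_diff_distrib)
        then show ?thesis using gw s_def by simp
      qed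
    qed
  qed
  then show ?thesis using g(1) gf by blast
qed

lemma HB_fin:
  fixes x0 :: "'a::real_normed_vector"
  assumes "finite S"
  shows "\<exists>f. linear f \<and> f x0 = norm x0 \<and> (\<forall>w\<in>span (insert x0 S). f w \<le> norm w)"
  using assms
proof (induction S rule: finite_induct)
  case empty
  show ?case
  proof (cases "x0 = 0")
    case True
    then show ?thesis by (intro exI[of _ "\<lambda>_. 0"]) (auto simp: linear_zero)
  next
    case False
    have "independent {x0}" using False by simp
    then obtain g where g: "linear g" "g x0 = norm x0"
      using linear_independent_extend[of "{x0}" "\<lambda>_. norm x0"] by auto
    have "\<forall>w\<in>span {x0}. g w \<le> norm w"
    proof
      fix w assume "w \<in> span {x0}"
      then obtain k where "w = k *\<^sub>R x0" by (auto simp: span_singleton)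
      then show "g w \<le> norm w" using g by (simp add: linear_scale mult_right_mono)
    qed
    then show ?thesis using g by blast
  qed
next
  case (insert z S)
  then obtain f where f: "linear f" "f x0 = norm x0" "\<forall>w\<in>span (insert x0 S). f w \<le> norm w" by blast
  have eq: "span (insert x0 (insert z S)) = span (insert z (insert x0 S))"
    by (simp add: insert_commute)
  show ?case
  proof (cases "z \<in> span (insert x0 S)")
    case True
    then have "span (insert z (insert x0 S)) = span (insert x0 S)"
      by (simp add: span_redundant)
    then show ?thesis using f eq by (intro exI[of _ f]) auto
  next
    case False
    obtain f' where f': "linear f'" "\<forall>m\<in>span (insert x0 S). f' m = f m"
      "\<forall>w\<in>span (insert z (insert x0 S)). f' w \<le> norm w"
      using HB_step[OF f(1) _ False] f(3) by blast
    have "f' x0 = norm x0" using f'(2) f(2) span_base[of x0 "insert x0 S"] by simp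
    then show ?thesis using f' eq by auto
  qed
qed

lemma HB_norming:
  fixes x0 :: "'a::real_normed_vector" and B :: "'a set"
  assumes B: "finite B" "span B = UNIV" and x0: "x0 \<noteq> 0"
  shows "\<exists>f. bounded_linear f \<and> onorm f = 1 \<and> f x0 = norm x0"
proof -
  obtain f where f: "linear f" "f x0 = norm x0" "\<forall>w\<in>span (insert x0 B). f w \<le> norm w"
    using HB_fin[OF B(1)] by blast
  have le: "f w \<le> norm w" for w using f(3) B(2) by (metis UNIV_I span_mono subset_insertI subsetD)
  have ab: "\<bar>f w\<bar> \<le> norm w" for w
  proof -
    have "- f w = f (- w)" using f(1) by (simp add: linear_neg)
    also have "\<dots> \<le> norm w" using le[of "-w"] by simp
    finally show ?thesis using le[of w] by simp
  qed
  have bl: "bounded_linear f"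
    by (rule bounded_linear_intro[where K=1]) (use f(1) ab in \<open>auto simp: linear_add linear_scale\<close>)
  have o1: "onorm f \<le> 1" by (rule onorm_bound) (use ab in auto)
  have "norm x0 \<le> onorm f * norm x0" using onorm[OF bl, of x0] f(2) by simp
  then have "1 \<le> onorm f" using x0 by simp
  then show ?thesis using o1 bl f(2) by (intro exI[of _ f]) auto
qed



lemma compact_hull_Un2:
  fixes A C :: "'a::real_normed_vector set"
  assumes A: "compact A" "convex A" "A \<noteq> {}" and C: "compact C" "convex C" "C \<noteq> {}"
  shows "compact (convex hull (A \<union> C))"
proof -
  define h where "h = (\<lambda>(u::real, (a::'a, c::'a)). (1 - u) *\<^sub>R a + u *\<^sub>R c)"
  define E where "E = h ` ({0..1} \<times> (A \<times> C))"
  have cE: "compact E" unfolding E_def h_def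
    by (intro compact_continuous_image compact_Times A(1) C(1) compact_Icc)
       (auto intro!: continuous_intros simp: case_prod_beta)
  have "convex hull (A \<union> C) \<subseteq> E"
  proof
    fix z assume "z \<in> convex hull (A \<union> C)"
    moreover have "\<Union> ((\<lambda>i. if i then A else C) ` UNIV) = A \<union> C" by auto
    ultimately have "z \<in> convex hull \<Union> ((\<lambda>i. if i then A else C) ` UNIV)" by simp
    then obtain c s where cs: "z = (\<Sum>i\<in>UNIV. c i *\<^sub>R s i)" "\<forall>i. 0 \<le> c i" "sum c UNIV = 1"
        "\<forall>i. s i \<in> (if i then A else C)"
      by (subst (asm) convex_hull_finite_union) (use A C in auto)
    have UNIVb: "(UNIV :: bool set) = {True, False}" by auto
    have z: "z = c True *\<^sub>R s True + c False *\<^sub>R s False" using cs(1) by (simp add: UNIVb)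
    have c1: "c True + c False = 1" using cs(3) by (simp add: UNIVb)
    have ct: "c True = 1 - c False" using c1 by simp
    have "z = h (c False, (s True, s False))" unfolding h_def using z by (simp add: ct)
    moreover have "(c False, (s True, s False)) \<in> {0..1} \<times> (A \<times> C)"
      using cs(2,4) c1 by (auto dest: spec[of _ True] spec[of _ False])
    ultimately show "z \<in> E" unfolding E_def by blast
  qed
  moreover have "E \<subseteq> convex hull (A \<union> C)"
  proof
    fix z assume "z \<in> E"
    then obtain u a c where z: "z = (1 - u) *\<^sub>R a + u *\<^sub>R c" "0 \<le> u" "u \<le> 1" "a \<in> A" "c \<in> C"
      unfolding E_def h_def by auto
    have "a \<in> convex hull (A \<union> C)" by (rule subsetD[OF hull_subset]) (simp add: z(4))
    have "c \<in> convex hull (A \<union> C)" by (rule subsetD[OF hull_subset]) (simp add: z(5))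
    then show "z \<in> convex hull (A \<union> C)"
      using convexD[OF convex_convex_hull \<open>a \<in> convex hull (A \<union> C)\<close> \<open>c \<in> convex hull (A \<union> C)\<close>, of "1 - u" u] z by simp
  qed
  ultimately show ?thesis using cE by (metis subset_antisym)
qed

lemma compact_hull_Union:
  fixes F :: "'a::real_normed_vector set set"
  assumes "finite F" "\<forall>K\<in>F. compact K \<and> convex K \<and> K \<noteq> {}"
  shows "compact (convex hull (\<Union>F))"
  using assms
proof (induction F rule: finite_induct)
  case empty then show ?case by simp
next
  case (insert A F)
  show ?case
  proof (cases "F = {}")
    case True
    then show ?thesis using insert.prems by (simp add: convex_hull_eq[THEN iffD2])
  next
    case False
    have cF: "compact (convex hull \<Union>F)" using insert by simp
    have neF: "convex hull \<Union>F \<noteq> {}" using False insert.prems by auto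
    have "convex hull (\<Union>(insert A F)) = convex hull (A \<union> convex hull \<Union>F)"
      by (simp only: Union_insert) (rule hull_Un_right)
    moreover have "compact (convex hull (A \<union> convex hull \<Union>F))"
      using insert.prems cF neF by (intro compact_hull_Un2) auto
    ultimately show ?thesis by simp
  qed
qed

lemma ext_norm:
  fixes x e :: "'a::real_normed_vector"
  assumes x: "x extreme_point_of cball 0 1" and e: "e \<noteq> 0"
  shows "norm x = 1"
proof (rule ccontr)
  assume ne: "norm x \<noteq> 1"
  have "norm x \<le> 1" using x by (simp add: extreme_point_of_def)
  then have t: "1 - norm x > 0" using ne by simp
  define t where "t = 1 - norm x"
  define e1 where "e1 = (1 / norm e) *\<^sub>R e"
  have e1: "norm e1 = 1" using e e1_def by simp
  define a where "a = x + t *\<^sub>R e1"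
  define b where "b = x - t *\<^sub>R e1"
  have "norm a \<le> 1" unfolding a_def using norm_triangle_ineq[of x "t *\<^sub>R e1"] e1 t t_def by simp
  moreover have "norm b \<le> 1" unfolding b_def using norm_triangle_ineq4[of x "t *\<^sub>R e1"] e1 t t_def by simp
  moreover have "x \<in> open_segment a b"
  proof -
    have "a - b = (2 * t) *\<^sub>R e1" unfolding a_def b_def by (simp add: algebra_simps scaleR_2[symmetric] scaleR_left_distrib[symmetric])
    then have "norm (a - b) = 2 * t" using e1 t t_def by simp
    then have "a \<noteq> b" using t t_def by auto
    moreover have "x = (1 - 1/2) *\<^sub>R a + (1/2) *\<^sub>R b" unfolding a_def b_def by (simp add: algebra_simps scaleR_left_distrib[symmetric])
    ultimately show ?thesis by (auto simp: in_segment intro!: exI[of _ "1/2"])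
  qed
  ultimately show False using x by (simp add: extreme_point_of_def)
qed



locale fdim =
  fixes B :: "'a::real_normed_vector set"
  assumes finB: "finite B" and indB: "independent B" and spanB: "span B = UNIV"
begin

definition crd :: "'a \<Rightarrow> 'a \<Rightarrow> real" where "crd b x = representation B x b"

lemma crd_add: "crd b (x + y) = crd b x + crd b y"
  unfolding crd_def using representation_add[OF indB, of y x] spanB by simp

lemma crd_scale: "crd b (r *\<^sub>R x) = r * crd b x"
  unfolding crd_def using representation_scale[OF indB, of x r] spanB by simp

lemma linear_crd: "linear (crd b)"
  by (rule linearI) (simp_all add: crd_add crd_scale)

lemma crd_out: "b \<notin> B \<Longrightarrow> crd b x = 0"
  unfolding crd_def using representation_ne_zero by blast

lemma expand: "(\<Sum>b\<in>B. crd b x *\<^sub>R b) = x"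
  unfolding crd_def using sum_representation_eq[OF indB _ finB] spanB by simp

lemma crd_sum: "b \<in> B \<Longrightarrow> crd b (\<Sum>i\<in>B. c i *\<^sub>R i) = c b"
proof -
  assume b: "b \<in> B"
  have "crd b (\<Sum>i\<in>B. c i *\<^sub>R i) = (\<Sum>i\<in>B. c i * crd b i)"
    using linear_crd[of b] by (simp add: linear_sum linear_scale)
  also have "\<dots> = (\<Sum>i\<in>B. if i = b then c i else 0)"
    by (rule sum.cong) (auto simp: crd_def representation_basis[OF indB])
  also have "\<dots> = c b" using b finB by simp
  finally show ?thesis .
qed

lemma crd_zero_imp: "(\<And>b. b \<in> B \<Longrightarrow> crd b x = 0) \<Longrightarrow> x = 0"
  using expand[of x] by simp

definition cube :: "real \<Rightarrow> ('a \<Rightarrow> real) set" where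
  "cube R = PiE UNIV (\<lambda>i. if i \<in> B then {-R..R} else {0})"

lemma compact_cube: "compact (cube R)"
proof -
  have "compactin (product_topology (\<lambda>i. euclidean) UNIV) (cube R)"
    unfolding cube_def compactin_PiE by (auto simp: compactin_euclidean_iff)
  then show ?thesis by (simp add: euclidean_product_topology compactin_euclidean_iff)
qed

lemma cube_iff: "c \<in> cube R \<longleftrightarrow> (\<forall>i. (i \<in> B \<longrightarrow> \<bar>c i\<bar> \<le> R) \<and> (i \<notin> B \<longrightarrow> c i = 0))"
  unfolding cube_def by (auto simp: PiE_iff abs_le_iff)

definition L :: "('a \<Rightarrow> real) \<Rightarrow> 'a" where "L c = (\<Sum>b\<in>B. c b *\<^sub>R b)"

lemma cont_coord: "continuous_on S (\<lambda>c::'a\<Rightarrow>real. c i)"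
  by (rule continuous_on_subset[OF continuous_on_product_coordinates]) simp

lemma cont_L: "continuous_on S L"
  unfolding L_def by (intro continuous_on_sum continuous_on_scaleR cont_coord continuous_on_const)

lemma norm_equiv: "\<exists>K>0. \<forall>x. \<forall>b. \<bar>crd b x\<bar> \<le> K * norm x"
proof (cases "B = {}")
  case True
  then show ?thesis using crd_out by (intro exI[of _ 1]) auto
next
  case False
  then obtain b0 where b0: "b0 \<in> B" by blast
  define S where "S = cube 1 \<inter> {c. 1 \<le> (\<Sum>i\<in>B. \<bar>c i\<bar>)}"
  have cS: "compact S" unfolding S_def
    by (intro compact_Int_closed compact_cube closed_Collect_le continuous_on_sum continuous_on_const
        continuous_on_rabs cont_coord)
  have Sne: "S \<noteq> {}"
  proof -
    define c where "c = (\<lambda>i. if i = b0 then 1 else (0::real))"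
    have "c \<in> S" unfolding S_def c_def using b0 finB by (auto simp: cube_iff)
    then show ?thesis by blast
  qed
  have ch: "continuous_on S (\<lambda>c. norm (L c))" by (intro continuous_intros cont_L)
  obtain c0 where c0: "c0 \<in> S" "\<forall>c\<in>S. norm (L c0) \<le> norm (L c)"
    using continuous_attains_inf[OF cS Sne ch] by blast
  define m where "m = norm (L c0)"
  have "L c0 \<noteq> 0"
  proof
    assume h: "L c0 = 0"
    have "c0 i = 0" if "i \<in> B" for i using crd_sum[OF that, of c0] h by (simp add: L_def crd_def representation_zero)
    then have "(\<Sum>i\<in>B. \<bar>c0 i\<bar>) = 0" by simp
    then show False using c0(1) unfolding S_def by simp
  qed
  then have m: "m > 0" using m_def by simp
  have main: "\<bar>crd b x\<bar> \<le> (1/m) * norm x" for b x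
  proof (cases "b \<in> B")
    case False then show ?thesis using crd_out m by simp
  next
    case True
    define s where "s = (\<Sum>i\<in>B. \<bar>crd i x\<bar>)"
    have bs: "\<bar>crd b x\<bar> \<le> s" unfolding s_def
      using member_le_sum[of b B "\<lambda>i. \<bar>crd i x\<bar>"] True finB by simp
    show ?thesis
    proof (cases "s = 0")
      case True then show ?thesis using bs m by simp
    next
      case False
      then have s: "s > 0" using bs by linarith
      define c where "c = (\<lambda>i. crd i x / s)"
      have "c \<in> S"
      proof -
        have "\<bar>c i\<bar> \<le> 1" if "i \<in> B" for i
          using member_le_sum[of i B "\<lambda>i. \<bar>crd i x\<bar>"] that finB s unfolding c_def s_def by simp
        moreover have "c i = 0" if "i \<notin> B" for i using that crd_out c_def by simp
        moreover have "(\<Sum>i\<in>B. \<bar>c i\<bar>) = 1" using s unfolding c_def s_def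
          by (simp add: sum_divide_distrib[symmetric])
        ultimately show ?thesis unfolding S_def by (auto simp: cube_iff)
      qed
      then have "m \<le> norm (L c)" using c0 m_def by simp
      also have "L c = (1/s) *\<^sub>R x"
      proof -
        have "L c = (\<Sum>b\<in>B. (1/s) *\<^sub>R (crd b x *\<^sub>R b))" unfolding L_def c_def by simp
        also have "\<dots> = (1/s) *\<^sub>R x" using expand[of x] by (simp only: scaleR_sum_right[symmetric])
        finally show ?thesis .
      qed
      finally have "m \<le> norm x / s" using s by simp
      then have "s \<le> norm x / m" using s m by (simp add: field_simps)
      then show ?thesis using bs by simp
    qed
  qed
  show ?thesis using m main by (intro exI[of _ "1/m"]) auto
qed

lemma linear_bounded: 
  fixes f :: "'a \<Rightarrow> 'b::real_normed_vector"
  assumes lf: "linear f" shows "bounded_linear f"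
proof -
  obtain K where K: "K > 0" "\<And>x b. \<bar>crd b x\<bar> \<le> K * norm x" using norm_equiv by blast
  have "norm (f x) \<le> norm x * (K * (\<Sum>b\<in>B. norm (f b)))" for x
  proof -
    have "f x = (\<Sum>b\<in>B. crd b x *\<^sub>R f b)"
      using expand[of x] lf by (metis (no_types, lifting) linear_scale linear_sum sum.cong)
    then have "norm (f x) \<le> (\<Sum>b\<in>B. norm (crd b x *\<^sub>R f b))"
      by (simp only: norm_sum)
    also have "\<dots> \<le> (\<Sum>b\<in>B. (K * norm x) * norm (f b))"
      by (intro sum_mono) (simp add: K(2) mult_right_mono)
    finally show ?thesis by (simp add: sum_distrib_left mult_ac)
  qed
  then show ?thesis using lf by (intro bounded_linear_intro) (auto simp: linear_add linear_scale)
qed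

lemma bl_crd: "bounded_linear (crd b)" by (rule linear_bounded[OF linear_crd])

lemma compact_cball: "compact (cball (0::'a) 1)"
proof -
  obtain K where K: "K > 0" "\<And>x b. \<bar>crd b x\<bar> \<le> K * norm x" using norm_equiv by blast
  have sub: "cball 0 1 \<subseteq> L ` cube K"
  proof
    fix x :: 'a assume "x \<in> cball 0 1"
    then have nx: "norm x \<le> 1" by simp
    define c where "c = (\<lambda>i. if i \<in> B then crd i x else 0)"
    have "c \<in> cube K"
    proof -
      have "\<bar>crd i x\<bar> \<le> K" for i
      proof -
        have "K * norm x \<le> K" using nx K(1) by (simp add: mult_left_le)
        then show ?thesis using K(2)[of i x] by linarith
      qed
      then show ?thesis unfolding cube_iff c_def by simp
    qed
    moreover have "L c = x" unfolding L_def c_def using expand[of x] by simp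
    ultimately show "x \<in> L ` cube K" using image_eqI[of x L c "cube K"] by simp
  qed
  have "compact (L ` cube K)" by (intro compact_continuous_image cont_L compact_cube)
  then have "compact (L ` cube K \<inter> cball 0 1)" by (intro compact_Int_closed) auto
  moreover have "L ` cube K \<inter> cball 0 1 = cball 0 1" using sub by blast
  ultimately show ?thesis by simp
qed

lemma compact_closed_sub: fixes S :: "'a set" assumes "closed S" "S \<subseteq> cball 0 1" shows "compact S"
proof -
  have "cball 0 1 \<inter> S = S" using assms by blast
  then show ?thesis using compact_Int_closed[OF compact_cball assms(1)] by simp
qed


lemma crd_diff: "crd b (x - y) = crd b x - crd b y"
  using crd_add[of b x "-y"] crd_scale[of b "-1" y] by simp

definition ip :: "'a \<Rightarrow> 'a \<Rightarrow> real" where "ip u v = (\<Sum>b\<in>B. crd b u * crd b v)"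
definition Q :: "'a \<Rightarrow> real" where "Q u = ip u u"

lemma Q_nonneg: "Q u \<ge> 0" unfolding Q_def ip_def by (intro sum_nonneg) simp

lemma Q_pos: assumes "u \<noteq> 0" shows "Q u > 0"
proof -
  obtain b where b: "b \<in> B" "crd b u \<noteq> 0" using crd_zero_imp assms by blast
  have "crd b u * crd b u \<le> Q u" unfolding Q_def ip_def
    using member_le_sum[of b B "\<lambda>b. crd b u * crd b u"] b finB by simp
  moreover have "crd b u * crd b u > 0" using b(2) not_real_square_gt_zero by blast
  ultimately show ?thesis by linarith
qed

lemma linear_ip: "linear (ip w)"
  by (rule linearI) (simp_all add: ip_def crd_add crd_scale sum.distrib distrib_left sum_distrib_left mult_ac)

lemma ip_diff: "ip w (x - y) = ip w x - ip w y"
  unfolding ip_def by (simp add: crd_diff right_diff_distrib sum_subtractf)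

lemma Q_expand: "Q (w - t *\<^sub>R v) = Q w - 2 * t * ip w v + t\<^sup>2 * Q v"
proof -
  have "Q (w - t *\<^sub>R v) = (\<Sum>b\<in>B. crd b w * crd b w - 2 * t * (crd b w * crd b v) + t\<^sup>2 * (crd b v * crd b v))"
    unfolding Q_def ip_def by (intro sum.cong) (auto simp: crd_diff crd_scale power2_eq_square algebra_simps)
  also have "\<dots> = Q w - 2 * t * ip w v + t\<^sup>2 * Q v"
    unfolding Q_def ip_def by (simp add: sum.distrib sum_subtractf sum_distrib_left)
  finally show ?thesis .
qed

lemma sq_comb: "((1-u)*p + u*q) * ((1-u)*p + u*q) = (1-u)*(p*p) + u*(q*q) - u*(1-u)*((p-q)*(p-q))"
  for p q u :: real by (simp add: algebra_simps)

lemma Q_convex_comb: "Q ((1 - u) *\<^sub>R a + u *\<^sub>R c) = (1 - u) * Q a + u * Q c - u * (1 - u) * Q (a - c)"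
proof -
  have "Q ((1 - u) *\<^sub>R a + u *\<^sub>R c) = (\<Sum>b\<in>B. (1 - u) * (crd b a * crd b a) + u * (crd b c * crd b c)
       - u * (1 - u) * ((crd b a - crd b c) * (crd b a - crd b c)))"
    unfolding Q_def ip_def
    by (intro sum.cong refl) (simp only: crd_add crd_scale sq_comb)
  also have "\<dots> = (1 - u) * Q a + u * Q c - u * (1 - u) * Q (a - c)"
    unfolding Q_def ip_def by (simp add: sum.distrib sum_subtractf sum_distrib_left crd_diff)
  finally show ?thesis .
qed

lemma cont_crd: "continuous_on S (crd b)"
  by (rule linear_continuous_on[OF bl_crd])

lemma cont_Q: "continuous_on S Q"
  unfolding Q_def ip_def by (intro continuous_on_sum continuous_on_mult cont_crd)

lemma exists_extreme:
  fixes F :: "'a set"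
  assumes "compact F" "F \<noteq> {}"
  shows "\<exists>y. y extreme_point_of F"
proof -
  obtain y where y: "y \<in> F" "\<forall>z\<in>F. Q z \<le> Q y"
    using continuous_attains_sup[OF assms cont_Q] by blast
  have "y extreme_point_of F"
    unfolding extreme_point_of_def
  proof (intro conjI ballI y(1) notI)
    fix a c assume a: "a \<in> F" and c: "c \<in> F" and yin: "y \<in> open_segment a c"
    then obtain u where u: "a \<noteq> c" "0 < u" "u < 1" "y = (1 - u) *\<^sub>R a + u *\<^sub>R c"
      by (auto simp: in_segment)
    have "Q (a - c) > 0" using u(1) Q_pos by simp
    then have pos: "u * (1 - u) * Q (a - c) > 0" using u by simp
    have "Q y = (1 - u) * Q a + u * Q c - u * (1 - u) * Q (a - c)" using u(4) Q_convex_comb by simp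
    moreover have "(1 - u) * Q a \<le> (1 - u) * Q y" using y(2) a u by (simp add: mult_left_mono)
    moreover have "u * Q c \<le> u * Q y" using y(2) c u by (simp add: mult_left_mono)
    ultimately have "Q y < (1 - u) * Q y + u * Q y" using pos by linarith
    then show False by (simp add: algebra_simps)
  qed
  then show ?thesis by blast
qed

lemma separation:
  fixes D :: "'a set" and x :: 'a
  assumes D: "compact D" "convex D" "D \<noteq> {}" and x: "x \<notin> D"
  shows "\<exists>(g::'a \<Rightarrow> real) \<alpha>. bounded_linear g \<and> (\<forall>d\<in>D. g d \<le> \<alpha>) \<and> \<alpha> < g x"
proof -
  have cont: "continuous_on D (\<lambda>d. Q (x - d))"
    unfolding Q_def ip_def crd_diff by (intro continuous_on_sum continuous_on_mult continuous_on_diff continuous_on_const cont_crd)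
  obtain q where q: "q \<in> D" "\<forall>d\<in>D. Q (x - q) \<le> Q (x - d)"
    using continuous_attains_inf[OF D(1) D(3) cont] by blast
  define w where "w = x - q"
  have w0: "w \<noteq> 0" using q(1) x w_def by auto
  have vi: "ip w (d - q) \<le> 0" if d: "d \<in> D" for d
  proof (rule ccontr)
    assume "\<not> ip w (d - q) \<le> 0"
    then have p: "ip w (d - q) > 0" by simp
    define v where "v = d - q"
    have v0: "v \<noteq> 0" using p v_def by (auto simp: ip_def crd_diff)
    have Qv: "Q v > 0" using Q_pos[OF v0] .
    define t where "t = min 1 (ip w v / Q v)"
    have t: "0 < t" "t \<le> 1" "t * Q v \<le> ip w v" using p Qv v_def unfolding t_def
      by (auto simp: min_def field_simps)
    have "(1 - t) *\<^sub>R q + t *\<^sub>R d \<in> D"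
      using D(2) q(1) d t unfolding convex_alt by simp
    moreover have "(1 - t) *\<^sub>R q + t *\<^sub>R d = q + t *\<^sub>R v" unfolding v_def by (simp add: algebra_simps)
    ultimately have "q + t *\<^sub>R v \<in> D" by simp
    then have "Q w \<le> Q (x - (q + t *\<^sub>R v))" using q(2) w_def by simp
    also have "x - (q + t *\<^sub>R v) = w - t *\<^sub>R v" using w_def by simp
    also have "Q (w - t *\<^sub>R v) = Q w - 2 * t * ip w v + t\<^sup>2 * Q v" by (rule Q_expand)
    finally have "2 * t * ip w v \<le> t * (t * Q v)" by (simp add: power2_eq_square mult_ac)
    then have "2 * ip w v \<le> t * Q v" using t(1) by (simp add: mult_ac)
    then show False using t(3) p v_def by simp
  qed
  have bl: "bounded_linear (ip w)" by (rule linear_bounded[OF linear_ip])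
  have "\<forall>d\<in>D. ip w d \<le> ip w q" using vi ip_diff by fastforce
  moreover have "ip w q < ip w x"
  proof -
    have "ip w x - ip w q = Q w" using ip_diff[of w x q] w_def Q_def by simp
    then show ?thesis using Q_pos[OF w0] by simp
  qed
  ultimately have "bounded_linear (ip w) \<and> (\<forall>d\<in>D. ip w d \<le> ip w q) \<and> ip w q < ip w x" using bl by blast
  note fin = this
  show ?thesis
    apply (rule_tac x="ip w" in exI)
    apply (rule_tac x="ip w q" in exI)
    apply (rule fin)
    done
qed

end
context fdim
begin

lemma choquet:
  fixes x :: 'a
  assumes x: "x extreme_point_of cball 0 1" and eps: "0 < \<epsilon>"
  shows "\<exists>(g::'a \<Rightarrow> real) \<beta>. bounded_linear g \<and> \<beta> < g x \<and> (\<forall>z\<in>cball 0 1. \<beta> < g z \<longrightarrow> norm (z - x) < \<epsilon>)"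
proof -
  define S where "S = cball (0::'a) 1 - ball x \<epsilon>"
  show ?thesis
  proof (cases "S = {}")
    case True
    have "\<forall>z\<in>cball 0 1. norm (z - x) < \<epsilon>"
    proof
      fix z :: 'a assume "z \<in> cball 0 1"
      then have "z \<in> ball x \<epsilon>" using True S_def by blast
      then show "norm (z - x) < \<epsilon>" by (simp add: dist_norm norm_minus_commute)
    qed
    note all = this
    show ?thesis
      apply (rule_tac x="\<lambda>_::'a. 0::real" in exI)
      apply (rule_tac x="-1::real" in exI)
      apply (simp add: bounded_linear_zero all)
      done
  next
    case False
    have clS: "closed S" unfolding S_def by (intro closed_Diff closed_cball open_ball)
    have cS: "compact S" by (rule compact_closed_sub[OF clS]) (auto simp: S_def)
    have cov: "S \<subseteq> \<Union> ((\<lambda>p. ball p (\<epsilon>/2)) ` S)" using eps by force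
    obtain C where C: "C \<subseteq> S" "finite C" "S \<subseteq> \<Union> ((\<lambda>p. ball p (\<epsilon>/2)) ` C)"
      using compactE_image[OF cS _ cov] by blast
    define F where "F = (\<lambda>p. cball (0::'a) 1 \<inter> cball p (\<epsilon>/2)) ` C"
    have Fprops: "\<forall>K\<in>F. compact K \<and> convex K \<and> K \<noteq> {}"
    proof
      fix K assume "K \<in> F"
      then obtain p where p: "p \<in> C" "K = cball 0 1 \<inter> cball p (\<epsilon>/2)" unfolding F_def by blast
      have "compact K" using p by (intro compact_closed_sub) auto
      moreover have "convex K" using p by (simp add: convex_Int)
      moreover have "p \<in> K" using p C(1) eps unfolding S_def by auto
      ultimately show "compact K \<and> convex K \<and> K \<noteq> {}" by blast
    qed
    define D where "D = convex hull (\<Union>F)"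
    have cD: "compact D" unfolding D_def using C(2) Fprops F_def by (intro compact_hull_Union) auto
    have SF: "S \<subseteq> \<Union>F"
    proof
      fix z assume z: "z \<in> S"
      then obtain p where p: "p \<in> C" "z \<in> ball p (\<epsilon>/2)" using C(3) by blast
      have "z \<in> cball 0 1 \<inter> cball p (\<epsilon>/2)" using z p(2) unfolding S_def by auto
      then show "z \<in> \<Union>F" using p(1) unfolding F_def by blast
    qed
    have SD: "S \<subseteq> D" unfolding D_def by (rule subset_trans[OF SF hull_subset])
    have Dne: "D \<noteq> {}" using False SD by blast
    have Dsub: "D \<subseteq> cball 0 1" unfolding D_def
      by (rule hull_minimal) (auto simp: F_def convex_cball)
    have xD: "x \<notin> D"
    proof
      assume xD: "x \<in> D"
      have "x extreme_point_of D"
        using x xD Dsub unfolding extreme_point_of_def by blast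
      then have "x \<in> \<Union>F" unfolding D_def by (rule extreme_point_of_convex_hull)
      then obtain p where p: "p \<in> C" "x \<in> cball p (\<epsilon>/2)" unfolding F_def by blast
      have "p \<in> S" using p C(1) by blast
      then have "\<epsilon> \<le> dist x p" unfolding S_def by auto
      moreover have "dist p x \<le> \<epsilon>/2" using p by simp
      ultimately show False using eps by (simp add: dist_commute)
    qed
    obtain g :: "'a \<Rightarrow> real" and \<alpha> :: real where g: "bounded_linear g" "\<forall>d\<in>D. g d \<le> \<alpha>" "\<alpha> < g x"
      using separation[OF cD _ Dne xD] unfolding D_def by (auto simp: convex_convex_hull)
    have "\<forall>z\<in>cball 0 1. \<alpha> < g z \<longrightarrow> norm (z - x) < \<epsilon>"
    proof (intro ballI impI)
      fix z :: 'a assume z: "z \<in> cball 0 1" "\<alpha> < g z"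
      then have "z \<notin> D" using g(2) by force
      then have "z \<notin> S" using SD by blast
      then have "z \<in> ball x \<epsilon>" using z(1) S_def by blast
      then show "norm (z - x) < \<epsilon>" by (simp add: dist_norm norm_minus_commute)
    qed
    then show ?thesis using g by blast
  qed
qed

end

lemma bl_scale: "bounded_linear f \<Longrightarrow> f (r *\<^sub>R x) = r *\<^sub>R f x"
  by (simp add: bounded_linear.linear linear_scale)
lemma bl_add: "bounded_linear f \<Longrightarrow> f (x + y) = f x + f y"
  by (simp add: bounded_linear.linear linear_add)
lemma bl_diff: "bounded_linear f \<Longrightarrow> f (x - y) = f x - f y"
  by (simp add: bounded_linear.linear linear_diff)
lemma bl_zero: "bounded_linear f \<Longrightarrow> f 0 = 0"
  by (simp add: bounded_linear.linear linear_0)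

lemma abs_le_onorm:
  fixes f :: "'a::real_normed_vector \<Rightarrow> real"
  assumes "bounded_linear f" "onorm f = 1"
  shows "\<bar>f w\<bar> \<le> norm w"
  using onorm[OF assms(1), of w] assms(2) by simp

theorem mainTheorem3:
  assumes fin_dim: "\<exists>B :: 'a::banach set. finite B \<and> span B = UNIV"
    and nontriv: "\<exists>x :: 'a. x \<noteq> 0"
  shows "numerical_index TYPE('a) = 1 \<longleftrightarrow>
         (\<forall>x y :: 'a. x extreme_point_of cball 0 1 \<longrightarrow> norm y = 1 \<longrightarrow> parallel_pair x y)"
proof -
  obtain B0 :: "'a set" where B0: "finite B0" "span B0 = UNIV" using fin_dim by blast
  obtain B where B: "B \<subseteq> B0" "independent B" "B0 \<subseteq> span B"
    using maximal_independent_subset[of B0] by blast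
  have finB: "finite B" using B(1) B0(1) finite_subset by blast
  have spanB: "span B = UNIV" using B(3) B0(2) by (metis span_mono span_span top.extremum_uniqueI)
  interpret fd: fdim B using finB B(2) spanB by unfold_locales
  obtain e :: 'a where e: "e \<noteq> 0" using nontriv by blast
  define u where "u = (1 / norm e) *\<^sub>R e"
  have u: "norm u = 1" using e u_def by simp
  have HB1: "\<exists>f. bounded_linear f \<and> onorm f = 1 \<and> f w = norm w" if "w \<noteq> 0" for w :: 'a
    using HB_norming[OF finB spanB that] .
  define W where "W T = {\<bar>(f :: 'a \<Rightarrow> real) (T x)\<bar> | x f. norm x = 1 \<and> bounded_linear f \<and> onorm f = 1 \<and> f x = 1}"
    for T :: "'a \<Rightarrow> 'a"
  have vr: "numerical_radius T = Sup (W T)" for T :: "'a \<Rightarrow> 'a" unfolding numerical_radius_def W_def by simp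
  define I where "I = {numerical_radius T | T :: 'a \<Rightarrow> 'a. bounded_linear T \<and> onorm T = 1}"
  have ni: "numerical_index TYPE('a) = Inf I" unfolding numerical_index_def I_def by simp
  have Wne: "W T \<noteq> {}" for T :: "'a \<Rightarrow> 'a"
  proof -
    have "u \<noteq> 0" using u by auto
    from HB1[OF this] obtain f where f: "bounded_linear f" "onorm f = 1" "f u = norm u" by blast
    then have "\<bar>f (T u)\<bar> \<in> W T" unfolding W_def using u by auto
    then show ?thesis by blast
  qed
  have Wle: "w \<le> 1" if wW: "w \<in> W T" and "bounded_linear T" "onorm T = 1" for w and T :: "'a \<Rightarrow> 'a"
  proof -
    obtain x f where xf: "w = \<bar>f (T x)\<bar>" "norm x = 1" "bounded_linear f" "onorm f = 1" "f x = 1"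
      using wW unfolding W_def by blast
    have "\<bar>f (T x)\<bar> \<le> norm (T x)" by (rule abs_le_onorm[OF xf(3,4)])
    also have "\<dots> \<le> onorm T * norm x" by (rule onorm[OF that(2)])
    finally show ?thesis using xf that by simp
  qed
  have Wbdd: "bdd_above (W T)" if "bounded_linear T" "onorm T = 1" for T :: "'a \<Rightarrow> 'a"
    using Wle[OF _ that] unfolding bdd_above_def by blast
  have Wnn: "0 \<le> w" if "w \<in> W T" for w and T :: "'a \<Rightarrow> 'a" using that unfolding W_def by auto
  have vle: "numerical_radius T \<le> 1" if "bounded_linear T" "onorm T = 1" for T :: "'a \<Rightarrow> 'a"
    unfolding vr by (rule cSup_least[OF Wne]) (use Wle that in blast)
  have vge0: "0 \<le> numerical_radius T" if "bounded_linear T" "onorm T = 1" for T :: "'a \<Rightarrow> 'a"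
  proof -
    obtain w where "w \<in> W T" using Wne by blast
    then show ?thesis unfolding vr using Wnn cSup_upper[OF _ Wbdd[OF that]] by (meson order_trans)
  qed
  have onorm_id1: "onorm (\<lambda>x::'a. x) = 1"
  proof (rule antisym[OF onorm_id_le])
    have "norm u \<le> onorm (\<lambda>x::'a. x) * norm u" using onorm[OF bounded_linear_ident, of u] by simp
    then show "1 \<le> onorm (\<lambda>x::'a. x)" using u by simp
  qed
  have Ine: "I \<noteq> {}" unfolding I_def using onorm_id1 bounded_linear_ident by blast
  have Ibdd: "bdd_below I" unfolding I_def bdd_below_def using vge0 by blast
  show ?thesis
  proof
    assume n1: "numerical_index TYPE('a) = 1"
    show "\<forall>x y :: 'a. x extreme_point_of cball 0 1 \<longrightarrow> norm y = 1 \<longrightarrow> parallel_pair x y"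
    proof (intro allI impI)
      fix x y :: 'a
      assume x: "x extreme_point_of cball 0 1" and y: "norm y = 1"
      have nx: "norm x = 1" using ext_norm[OF x e] .
      have approx: "\<exists>l::real. \<bar>l\<bar> = 1 \<and> 2 - 2 * \<epsilon> < norm (x + l *\<^sub>R y)" if eps: "0 < \<epsilon>" "\<epsilon> \<le> 1" for \<epsilon>
      proof -
        obtain g :: "'a \<Rightarrow> real" and \<beta> :: real where g: "bounded_linear g" "\<beta> < g x"
          "\<forall>z\<in>cball 0 1. \<beta> < g z \<longrightarrow> norm (z - x) < \<epsilon>"
          using fd.choquet[OF x eps(1)] by blast
        define N where "N = onorm g"
        have N0: "N > 0"
        proof (rule ccontr)
          assume "\<not> N > 0"
          then have "N = 0" using onorm_pos_le[OF g(1)] N_def by simp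
          then have gz: "g z = 0" for z using onorm[OF g(1), of z] N_def by simp
          have "norm (- x - x) < \<epsilon>" using g(3) gz g(2) nx by (simp add: gz)
          moreover have "norm (- x - x) = 2"
          proof -
            have "- x - x = - ((2::real) *\<^sub>R x)" by (simp add: scaleR_2 algebra_simps)
            then show ?thesis using nx by simp
          qed
          ultimately show False using eps by simp
        qed
        define h where "h z = (1 / N) *\<^sub>R g z" for z
        have hbl: "bounded_linear h" unfolding h_def by (rule bounded_linear_compose[OF bounded_linear_scaleR_right g(1)])
        have hn: "onorm h = 1" unfolding h_def using onorm_scaleR[OF g(1), of "1/N"] N0 N_def by simp
        have hx: "h x \<le> 1" using abs_le_onorm[OF hbl hn, of x] nx by simp
        define \<beta>' where "\<beta>' = max (\<beta> / N) (1 - \<epsilon>)"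
        have b'1: "\<beta>' < 1"
        proof -
          have "\<beta> / N < h x" unfolding h_def using g(2) N0 by (simp add: divide_strict_right_mono)
          then show ?thesis using hx eps unfolding \<beta>'_def by simp
        qed
        define T where "T z = h z *\<^sub>R y" for z
        have Tbl: "bounded_linear T" unfolding T_def
          by (rule bounded_linear_compose[OF bounded_linear_scaleR_left hbl])
        have Tn: "onorm T = 1" unfolding T_def using onorm_scaleR_left[OF hbl, of y] hn y by simp
        have "numerical_radius T \<in> I" unfolding I_def using Tbl Tn by blast
        then have "1 \<le> numerical_radius T" using cInf_lower[OF _ Ibdd] n1 ni by metis
        then have "\<beta>' < Sup (W T)" using b'1 vr by simp
        then obtain w where "w \<in> W T" "\<beta>' < w" using less_cSup_iff[OF Wne Wbdd[OF Tbl Tn]] by blast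
        then obtain z f where zf: "\<beta>' < \<bar>f (T z)\<bar>" "norm z = 1" "bounded_linear f" "onorm f = 1" "f z = 1"
          unfolding W_def by blast
        have fTz: "f (T z) = h z * f y" unfolding T_def using bl_scale[OF zf(3)] by simp
        have hz1: "\<bar>h z\<bar> \<le> 1" using abs_le_onorm[OF hbl hn, of z] zf(2) by simp
        have fy1: "\<bar>f y\<bar> \<le> 1" using abs_le_onorm[OF zf(3,4), of y] y by simp
        have prod: "\<beta>' < \<bar>h z\<bar> * \<bar>f y\<bar>" using zf(1) fTz by (simp add: abs_mult)
        have hzb: "\<beta>' < \<bar>h z\<bar>"
        proof -
          have "\<bar>h z\<bar> * \<bar>f y\<bar> \<le> \<bar>h z\<bar>" using fy1 by (simp add: mult_left_le)
          then show ?thesis using prod by linarith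
        qed
        have fyb: "\<beta>' < \<bar>f y\<bar>"
        proof -
          have "\<bar>h z\<bar> * \<bar>f y\<bar> \<le> \<bar>f y\<bar>" using hz1 by (simp add: mult_left_le_one_le)
          then show ?thesis using prod by linarith
        qed
        have hz0: "h z \<noteq> 0" using hzb eps unfolding \<beta>'_def by auto
        define s where "s = sgn (h z)"
        have s2: "s * s = 1" using hz0 s_def by (simp add: sgn_real_def)
        have sa: "\<bar>s\<bar> = 1" using hz0 s_def by (simp add: sgn_real_def)
        define z' where "z' = s *\<^sub>R z"
        define f' where "f' w = s * f w" for w
        have f'bl: "bounded_linear f'" unfolding f'_def by (rule bounded_linear_compose[OF bounded_linear_mult_right zf(3)])
        have f'le: "\<bar>f' w\<bar> \<le> norm w" for w
          unfolding f'_def using abs_le_onorm[OF zf(3,4), of w] sa by (simp add: abs_mult)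
        have f'z: "f' z' = 1" unfolding f'_def z'_def using bl_scale[OF zf(3)] zf(5) s2 by simp
        have hz': "h z' = \<bar>h z\<bar>" unfolding z'_def s_def using bl_scale[OF hbl]
          by (simp add: abs_sgn mult.commute)
        have nz': "norm z' = 1" unfolding z'_def using sa zf(2) by simp
        have "\<beta> / N < h z'" using hz' hzb unfolding \<beta>'_def by simp
        then have "\<beta> < g z'" unfolding h_def using N0 by (simp add: field_simps)
        then have close: "norm (z' - x) < \<epsilon>" using g(3) nz' by simp
        have f'x: "1 - \<epsilon> < f' x"
        proof -
          have "f' x = f' z' - f' (z' - x)" using bl_diff[OF f'bl, of z' x] by simp
          moreover have "f' (z' - x) < \<epsilon>" using f'le[of "z' - x"] close by simp
          ultimately show ?thesis using f'z by simp
        qed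
        define l where "l = sgn (f' y)"
        have f'y: "\<bar>f' y\<bar> = \<bar>f y\<bar>" unfolding f'_def using sa by (simp add: abs_mult)
        have fy0: "f' y \<noteq> 0" using f'y fyb eps unfolding \<beta>'_def by auto
        have la: "\<bar>l\<bar> = 1" using fy0 l_def by (simp add: sgn_real_def)
        have "f' (x + l *\<^sub>R y) = f' x + l * f' y"
          using bl_add[OF f'bl] bl_scale[OF f'bl] by simp
        also have "l * f' y = \<bar>f' y\<bar>" unfolding l_def by (simp add: abs_sgn mult.commute)
        finally have "f' (x + l *\<^sub>R y) = f' x + \<bar>f y\<bar>" using f'y by simp
        moreover have "f' (x + l *\<^sub>R y) \<le> norm (x + l *\<^sub>R y)" using f'le[of "x + l *\<^sub>R y"] by simp
        moreover have "1 - \<epsilon> \<le> \<bar>f y\<bar>" using fyb unfolding \<beta>'_def by simp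
        ultimately have "2 - 2 * \<epsilon> < norm (x + l *\<^sub>R y)" using f'x by linarith
        then show ?thesis using la by blast
      qed
      show "parallel_pair x y"
      proof (rule ccontr)
        assume np: "\<not> parallel_pair x y"
        have lt: "norm (x + l *\<^sub>R y) < 2" if "\<bar>l\<bar> = 1" for l :: real
        proof -
          have "norm (x + l *\<^sub>R y) \<le> norm x + norm (l *\<^sub>R y)" by (rule norm_triangle_ineq)
          then have "norm (x + l *\<^sub>R y) \<le> 2" using nx y that by simp
          moreover have "norm (x + l *\<^sub>R y) \<noteq> 2" using np that nx y unfolding parallel_pair_def by auto
          ultimately show ?thesis by simp
        qed
        define \<delta> where "\<delta> = 2 - max (norm (x + y)) (norm (x - y))"
        have d0: "\<delta> > 0" unfolding \<delta>_def using lt[of 1] lt[of "-1"] by simp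
        define \<epsilon> where "\<epsilon> = min 1 (\<delta> / 2)"
        have e0: "0 < \<epsilon>" "\<epsilon> \<le> 1" unfolding \<epsilon>_def using d0 by auto
        obtain l :: real where l: "\<bar>l\<bar> = 1" "2 - 2 * \<epsilon> < norm (x + l *\<^sub>R y)" using approx[OF e0] by blast
        have "2 - 2 * \<epsilon> \<ge> 2 - \<delta>" unfolding \<epsilon>_def by simp
        moreover have "norm (x + l *\<^sub>R y) \<le> 2 - \<delta>"
        proof (cases "l = 1")
          case True then show ?thesis unfolding \<delta>_def by simp
        next
          case False then have "l = -1" using l(1) by (simp add: abs_if split: if_splits)
          then show ?thesis unfolding \<delta>_def by simp
        qed
        ultimately show False using l(2) by simp
      qed
    qed
  next
    assume P: "\<forall>x y :: 'a. x extreme_point_of cball 0 1 \<longrightarrow> norm y = 1 \<longrightarrow> parallel_pair x y"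
    have v1: "numerical_radius T = 1" if Tbl: "bounded_linear T" and Tn: "onorm T = 1" for T :: "'a \<Rightarrow> 'a"
    proof (rule antisym[OF vle[OF that]])
      have cT: "continuous_on (cball 0 1) (\<lambda>z. norm (T z))"
        by (intro continuous_on_norm linear_continuous_on Tbl)
      obtain x1 where x1: "x1 \<in> cball 0 1" "\<forall>z\<in>cball 0 1. norm (T z) \<le> norm (T x1)"
        using continuous_attains_sup[OF fd.compact_cball _ cT] by auto
      have "onorm T \<le> norm (T x1)"
      proof (rule onorm_bound)
        show "0 \<le> norm (T x1)" by simp
        fix z :: 'a
        show "norm (T z) \<le> norm (T x1) * norm z"
        proof (cases "z = 0")
          case True then show ?thesis using bl_zero[OF Tbl] by simp
        next
          case False
          have "(1 / norm z) *\<^sub>R z \<in> cball 0 1" using False by simp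
          then have "norm (T ((1 / norm z) *\<^sub>R z)) \<le> norm (T x1)" using x1 by blast
          then have "norm (T z) / norm z \<le> norm (T x1)" using bl_scale[OF Tbl] by simp
          then show ?thesis using False by (simp add: field_simps)
        qed
      qed
      moreover have "norm (T x1) \<le> 1" using onorm[OF Tbl, of x1] Tn x1(1) by (simp add: order_trans)
      ultimately have nTx1: "norm (T x1) = 1" using Tn by simp
      then have "T x1 \<noteq> 0" by auto
      from HB1[OF this] obtain g :: "'a \<Rightarrow> real" where g0: "bounded_linear g" "onorm g = 1" "g (T x1) = norm (T x1)"
        by blast
      then have g: "bounded_linear g" "onorm g = 1" "g (T x1) = 1" using nTx1 by auto
      define \<phi> where "\<phi> z = g (T z)" for z
      have \<phi>bl: "bounded_linear \<phi>" unfolding \<phi>_def by (rule bounded_linear_compose[OF g(1) Tbl])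
      have \<phi>le: "\<phi> z \<le> 1" if "z \<in> cball 0 1" for z
      proof -
        have "\<phi> z \<le> norm (T z)" unfolding \<phi>_def using abs_le_onorm[OF g(1,2), of "T z"] by simp
        also have "\<dots> \<le> onorm T * norm z" by (rule onorm[OF Tbl])
        finally show ?thesis using that Tn by simp
      qed
      define F where "F = cball 0 1 \<inter> {z. \<phi> z = 1}"
      have clF: "closed F" unfolding F_def
        by (intro closed_Int closed_cball closed_Collect_eq linear_continuous_on \<phi>bl continuous_on_const)
      have cF: "compact F" by (rule fd.compact_closed_sub[OF clF]) (auto simp: F_def)
      have Fne: "F \<noteq> {}" using x1(1) g(3) unfolding F_def \<phi>_def by blast
      obtain y where y: "y extreme_point_of F" using fd.exists_extreme[OF cF Fne] by blast
      have yF: "y \<in> F" using y by (simp add: extreme_point_of_def)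
      have yext: "y extreme_point_of cball 0 1"
        unfolding extreme_point_of_def
      proof (intro conjI ballI notI)
        show "y \<in> cball 0 1" using yF F_def by simp
        fix a b assume a: "a \<in> cball (0::'a) 1" and b: "b \<in> cball (0::'a) 1" and yab: "y \<in> open_segment a b"
        then obtain t where t: "a \<noteq> b" "0 < t" "t < 1" "y = (1 - t) *\<^sub>R a + t *\<^sub>R b"
          by (auto simp: in_segment)
        have "\<phi> y = (1 - t) * \<phi> a + t * \<phi> b"
          using t(4) bl_add[OF \<phi>bl] bl_scale[OF \<phi>bl] by simp
        moreover have "\<phi> y = 1" using yF F_def by simp
        moreover have "\<phi> a \<le> 1" "\<phi> b \<le> 1" using \<phi>le a b by auto
        ultimately have "\<phi> a = 1 \<and> \<phi> b = 1"
        proof -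
          assume eq: "\<phi> y = (1 - t) * \<phi> a + t * \<phi> b" and y1: "\<phi> y = 1" and "\<phi> a \<le> 1" "\<phi> b \<le> 1"
          have "(1 - t) * \<phi> a \<le> (1 - t) * 1" using \<open>\<phi> a \<le> 1\<close> t by (intro mult_left_mono) auto
          moreover have "t * \<phi> b \<le> t * 1" using \<open>\<phi> b \<le> 1\<close> t by (intro mult_left_mono) auto
          moreover have "(1 - t) * \<phi> a < (1 - t) * 1" if "\<phi> a < 1" using that t by simp
          moreover have "t * \<phi> b < t * 1" if "\<phi> b < 1" using that t by simp
          ultimately show ?thesis using eq y1 \<open>\<phi> a \<le> 1\<close> \<open>\<phi> b \<le> 1\<close> by fastforce
        qed
        then have "a \<in> F" "b \<in> F" using a b F_def by auto
        then show False using y yab by (simp add: extreme_point_of_def)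
      qed
      have ny: "norm y = 1" using ext_norm[OF yext e] .
      have nTy: "norm (T y) = 1"
      proof -
        have "1 = \<phi> y" using yF F_def by simp
        also have "\<dots> \<le> norm (T y)" unfolding \<phi>_def using abs_le_onorm[OF g(1,2), of "T y"] by simp
        finally have "1 \<le> norm (T y)" .
        moreover have "norm (T y) \<le> 1" using onorm[OF Tbl, of y] Tn ny by simp
        ultimately show ?thesis by simp
      qed
      obtain l :: real where l: "\<bar>l\<bar> = 1" "norm (y + l *\<^sub>R T y) = norm y + norm (T y)"
        using P yext nTy unfolding parallel_pair_def by blast
      have n2: "norm (y + l *\<^sub>R T y) = 2" using l ny nTy by simp
      then have "y + l *\<^sub>R T y \<noteq> 0" by auto
      from HB1[OF this] obtain k :: "'a \<Rightarrow> real" where k0: "bounded_linear k" "onorm k = 1"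
          "k (y + l *\<^sub>R T y) = norm (y + l *\<^sub>R T y)" by blast
      then have k: "bounded_linear k" "onorm k = 1" "k (y + l *\<^sub>R T y) = 2" using n2 by auto
      have ky: "k y \<le> 1" using abs_le_onorm[OF k(1,2), of y] ny by simp
      have klT: "k (l *\<^sub>R T y) \<le> 1" using abs_le_onorm[OF k(1,2), of "l *\<^sub>R T y"] nTy l(1) by simp
      have "k (y + l *\<^sub>R T y) = k y + k (l *\<^sub>R T y)" by (rule bl_add[OF k(1)])
      then have "k (l *\<^sub>R T y) = 1" using k(3) ky klT by simp
      then have "l * k (T y) = 1" using bl_scale[OF k(1)] by simp
      then have "\<bar>k (T y)\<bar> = 1" using l(1) by (metis abs_mult abs_one mult_1)
      moreover have "\<bar>k (T y)\<bar> \<in> W T"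
      proof -
        have "k y = 1" using \<open>k (l *\<^sub>R T y) = 1\<close> k(3) \<open>k (y + l *\<^sub>R T y) = k y + k (l *\<^sub>R T y)\<close> by simp
        then show ?thesis unfolding W_def using ny k(1,2) by blast
      qed
      ultimately have "1 \<le> Sup (W T)" using cSup_upper[OF _ Wbdd[OF Tbl Tn]] by metis
      then show "1 \<le> numerical_radius T" using vr by simp
    qed
    have "I \<subseteq> {1}" using v1 unfolding I_def by blast
    then have "I = {1}" using Ine by (simp add: subset_singleton_iff)
    then show "numerical_index TYPE('a) = 1" using ni by simp
  qed
qed

end
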